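(* Let $p(t)=1+\sum_{j=1}^K c_jt^j$ be a real polynomial with each $c_j\ge 0$, and suppose at least $k$ of the $c_j$ are positive. Let $m\ge 0$ be an integer and $F(t)=(1+t)^m$. Then $N(Fp)\ge m+1+k$.
   Context: $N(q)$ denotes the number of distinct monomials with nonzero coefficient in the polynomial $q$. *)

theory Defs
  imports "HOL-Computational_Algebra.Polynomial"
begin

definition num_monomials :: "'a::zero poly \<Rightarrow> nat" where
  "num_monomials q = card {i. coeff q i \<noteq> 0}"

end

theory Submission
  imports Defs
begin

lemma coeff_x1_mult: "coeff ([:1, 1:] * q) i = coeff q i + (case i of 0 \<Rightarrow> 0 | Suc n \<Rightarrow> coeff (q::real poly) n)"
  by (simp add: mult_pCons_left coeff_pCons)

lemma nonneg_x1_mult: "\<forall>j. coeff q j \<ge> 0 \<Longrightarrow> \<forall>j. coeff ([:1, 1:] * (q::real poly)) j \<ge> 0"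
proof
  fix j assume h: "\<forall>j. coeff q j \<ge> 0"
  show "coeff ([:1, 1:] * q) j \<ge> 0"
    unfolding coeff_x1_mult using h by (cases j) (auto intro: add_nonneg_nonneg)
qed

lemma finite_supp: "finite {i. coeff (q::real poly) i \<noteq> 0}"
proof -
  have "{i. coeff q i \<noteq> 0} \<subseteq> {..degree q}" using le_degree by auto
  then show ?thesis using finite_subset by blast
qed

lemma step:
  assumes "\<forall>j. coeff q j \<ge> 0" "q \<noteq> 0"
  shows "num_monomials ([:1, 1:] * (q::real poly)) \<ge> num_monomials q + 1"
proof -
  let ?S = "{i. coeff q i \<noteq> 0}"
  let ?T = "{i. coeff ([:1, 1:] * q) i \<noteq> 0}"
  have sub: "insert (Suc (degree q)) ?S \<subseteq> ?T"
  proof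
    fix i assume "i \<in> insert (Suc (degree q)) ?S"
    then show "i \<in> ?T"
    proof
      assume "i = Suc (degree q)"
      then show ?thesis using assms coeff_x1_mult[of q i]
        by (simp add: coeff_eq_0)
    next
      assume "i \<in> ?S"
      then show ?thesis using assms coeff_x1_mult[of q i]
        by (auto split: nat.split) (smt (verit))+
    qed
  qed
  have nin: "Suc (degree q) \<notin> ?S" by (simp add: coeff_eq_0)
  have "card (insert (Suc (degree q)) ?S) = card ?S + 1"
    using nin finite_supp[of q] by simp
  moreover have "card (insert (Suc (degree q)) ?S) \<le> card ?T"
    by (rule card_mono[OF finite_supp sub])
  ultimately show ?thesis unfolding num_monomials_def by simp
qed

lemma iter:
  assumes "\<forall>j. coeff q j \<ge> 0" "q \<noteq> 0"
  shows "num_monomials ([:1, 1:] ^ m * (q::real poly)) \<ge> num_monomials q + m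
     \<and> (\<forall>j. coeff ([:1, 1:] ^ m * q) j \<ge> 0) \<and> [:1, 1:] ^ m * q \<noteq> 0"
proof (induction m)
  case 0
  then show ?case using assms by simp
next
  case (Suc m)
  let ?r = "[:1, 1:] ^ m * q"
  have e: "[:1, 1:] ^ Suc m * q = [:1, 1:] * ?r" by (simp only: power_Suc mult.assoc)
  have "num_monomials ([:1, 1:] * ?r) \<ge> num_monomials ?r + 1"
    using step Suc by blast
  moreover have "[:1, 1:] * ?r \<noteq> 0"
  proof -
    have a: "[:1, 1:] \<noteq> (0::real poly)" by simp
    have b: "?r \<noteq> 0" using Suc by blast
    show ?thesis using no_zero_divisors[OF a b] .
  qed
  ultimately show ?case unfolding e using Suc nonneg_x1_mult by fastforce
qed

theorem proposition2p4:
  fixes p :: "real poly" and k m :: nat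
  assumes "coeff p 0 = 1"
    and "\<forall>j. coeff p j \<ge> 0"
    and "card {j. j \<ge> 1 \<and> coeff p j > 0} \<ge> k"
  shows "num_monomials ([:1, 1:] ^ m * p) \<ge> m + 1 + k"
proof -
  have p0: "p \<noteq> 0" using assms(1) by auto
  have sub: "insert 0 {j. j \<ge> 1 \<and> coeff p j > 0} \<subseteq> {i. coeff p i \<noteq> 0}"
    using assms(1) by auto
  have "card (insert 0 {j. j \<ge> 1 \<and> coeff p j > 0}) = card {j. j \<ge> 1 \<and> coeff p j > 0} + 1"
  proof -
    have "finite {j. j \<ge> 1 \<and> coeff p j > 0}"
      by (rule finite_subset[OF _ finite_supp[of p]]) auto
    then show ?thesis by simp
  qed
  moreover have "card (insert 0 {j. j \<ge> 1 \<and> coeff p j > 0}) \<le> num_monomials p"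
    unfolding num_monomials_def by (rule card_mono[OF finite_supp sub])
  ultimately have "num_monomials p \<ge> k + 1" using assms(3) by simp
  then show ?thesis using iter[OF assms(2) p0, of m] by simp
qed

end
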